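(* Let $\phi$ be a posterior family for a model $\pi$ with data space $Y$ and parameter space $\Theta$, and let $f$ be a test quantity. Then for every $y\in Y$: $C_{\phi,f}(s\mid y)=C_f(s\mid y)$ for all $s\in\mathbb{R}$ if and only if $q_{\phi,f}(x\mid y)=x$ for all $x\in[0,1]$.
   Context: Model $\pi$: prior density $\pi_{\text{prior}}(\theta)$ on $\Theta$, observation density $\pi_{\text{obs}}(y\mid\theta)$ on $Y$, $\pi_{\text{marg}}(y)=\int_\Theta\pi_{\text{obs}}(y\mid\theta)\pi_{\text{prior}}(\theta)\,\mathrm{d}\theta$, $\pi_{\text{post}}(\theta\mid y)=\pi_{\text{obs}}(y\mid\theta)\pi_{\text{prior}}(\theta)/\pi_{\text{marg}}(y)$. A posterior family is $\phi:\Theta\times Y\to\mathbb{R}^+$ with $\int_\Theta\phi(\theta\mid y)\,\mathrm{d}\theta=1$ for all $y$; a test quantity is a measurable $f:\Theta\times Y\to\mathbb{R}$. Fitted CDF $C_{\phi,f}(s\mid y)=\int_\Theta\mathbb{I}[f(\theta,y)\le s]\phi(\theta\mid y)\,\mathrm{d}\theta$; true CDF $C_f(s\mid y)=\int_\Theta\mathbb{I}[f(\theta,y)\le s]\pi_{\text{post}}(\theta\mid y)\,\mathrm{d}\theta$; fitted tie probability $D_{\phi,f}(s\mid y)=\int_\Theta\mathbb{I}[f(\theta,y)=s]\phi(\theta\mid y)\,\mathrm{d}\theta$. With $U\sim\mathrm{uniform}[0,1]$, $r_{\phi,f}(x\mid\tilde\theta,y)=\Pr\big(C_{\phi,f}(f(\tilde\theta,y)\mid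 y)-U\,D_{\phi,f}(f(\tilde\theta,y)\mid y)\le x\big)$ and $q_{\phi,f}(x\mid y)=\int_\Theta\pi_{\text{post}}(\tilde\theta\mid y)r_{\phi,f}(x\mid\tilde\theta,y)\,\mathrm{d}\tilde\theta$. *)

theory Defs
  imports "HOL-Analysis.Analysis"
begin

text \<open>Parameter space Theta = space M (base measure d theta), data space Y = space N.
  Densities are w.r.t. these base measures. Test quantity f and posterior family phi
  are written curried: f theta y, phi theta y (= phi(theta | y)).\<close>

definition marg :: "'a measure \<Rightarrow> ('a \<Rightarrow> real) \<Rightarrow> ('a \<Rightarrow> 'b \<Rightarrow> real) \<Rightarrow> 'b \<Rightarrow> real" where
  "marg M prior obs y = (\<integral>\<theta>. obs \<theta> y * prior \<theta> \<partial>M)"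

definition post :: "'a measure \<Rightarrow> ('a \<Rightarrow> real) \<Rightarrow> ('a \<Rightarrow> 'b \<Rightarrow> real) \<Rightarrow> 'a \<Rightarrow> 'b \<Rightarrow> real" where
  "post M prior obs \<theta> y = obs \<theta> y * prior \<theta> / marg M prior obs y"

definition fitted_cdf :: "'a measure \<Rightarrow> ('a \<Rightarrow> 'b \<Rightarrow> real) \<Rightarrow> ('a \<Rightarrow> 'b \<Rightarrow> real) \<Rightarrow> real \<Rightarrow> 'b \<Rightarrow> real" where
  "fitted_cdf M phi f s y = (\<integral>\<theta>. indicator {\<theta>. f \<theta> y \<le> s} \<theta> * phi \<theta> y \<partial>M)"

definition true_cdf :: "'a measure \<Rightarrow> ('a \<Rightarrow> real) \<Rightarrow> ('a \<Rightarrow> 'b \<Rightarrow> real) \<Rightarrow> ('a \<Rightarrow> 'b \<Rightarrow> real) \<Rightarrow> real \<Rightarrow> 'b \<Rightarrow> real" where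
  "true_cdf M prior obs f s y = (\<integral>\<theta>. indicator {\<theta>. f \<theta> y \<le> s} \<theta> * post M prior obs \<theta> y \<partial>M)"

definition fitted_tie :: "'a measure \<Rightarrow> ('a \<Rightarrow> 'b \<Rightarrow> real) \<Rightarrow> ('a \<Rightarrow> 'b \<Rightarrow> real) \<Rightarrow> real \<Rightarrow> 'b \<Rightarrow> real" where
  "fitted_tie M phi f s y = (\<integral>\<theta>. indicator {\<theta>. f \<theta> y = s} \<theta> * phi \<theta> y \<partial>M)"

text \<open>r(x | theta~, y) = Pr(C - U D <= x) with U ~ uniform[0,1], i.e. the Lebesgue
  measure of the set of u in [0,1] with C - u D <= x.\<close>
definition rand_pit_cdf :: "'a measure \<Rightarrow> ('a \<Rightarrow> 'b \<Rightarrow> real) \<Rightarrow> ('a \<Rightarrow> 'b \<Rightarrow> real) \<Rightarrow> real \<Rightarrow> 'a \<Rightarrow> 'b \<Rightarrow> real" where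
  "rand_pit_cdf M phi f x \<theta>' y =
     measure (uniform_measure lborel {0..1::real})
       {u. fitted_cdf M phi f (f \<theta>' y) y - u * fitted_tie M phi f (f \<theta>' y) y \<le> x}"

definition q_fun :: "'a measure \<Rightarrow> ('a \<Rightarrow> real) \<Rightarrow> ('a \<Rightarrow> 'b \<Rightarrow> real) \<Rightarrow> ('a \<Rightarrow> 'b \<Rightarrow> real) \<Rightarrow> ('a \<Rightarrow> 'b \<Rightarrow> real) \<Rightarrow> real \<Rightarrow> 'b \<Rightarrow> real" where
  "q_fun M prior obs phi f x y =
     (\<integral>\<theta>'. post M prior obs \<theta>' y * rand_pit_cdf M phi f x \<theta>' y \<partial>M)"

end

theory Submission
  imports Defs "HOL-Probability.Probability"
begin


definition hh :: "real \<Rightarrow> real \<Rightarrow> real \<Rightarrow> real" where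
  "hh c d x = measure (uniform_measure lborel {0..1::real}) {u. c - u * d \<le> x}"

lemma hh_formula:
  assumes d: "d \<ge> 0"
  shows "hh c d x = (if d = 0 then (if c \<le> x then 1 else 0) else max 0 (min 1 ((x - c + d) / d)))"
proof -
  have S: "{u::real. c - u * d \<le> x} \<in> sets lborel" by measurable
  have "hh c d x = measure lborel ({0..1} \<inter> {u. c - u * d \<le> x})"
    unfolding hh_def by (subst measure_uniform_measure) (use S in auto)
  also have "\<dots> = (if d = 0 then (if c \<le> x then 1 else 0) else max 0 (min 1 ((x - c + d) / d)))"
  proof (cases "d = 0")
    case True
    then show ?thesis by auto
  next
    case False
    then have dp: "d > 0" using d by auto
    define l where "l = (c - x) / d"
    have "{u::real. c - u * d \<le> x} = {l..}"
      using dp by (auto simp: l_def field_simps)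
    then have "{0..1} \<inter> {u::real. c - u * d \<le> x} = {max 0 l..1}" by auto
    moreover have "(x - c + d) / d = 1 - l" using dp by (simp add: l_def field_simps)
    ultimately show ?thesis using False by (auto simp: max_def min_def)
  qed
  finally show ?thesis .
qed



lemma hh_nonneg: "d \<ge> 0 \<Longrightarrow> 0 \<le> hh c d x" by (simp add: hh_formula)
lemma hh_le1: "d \<ge> 0 \<Longrightarrow> hh c d x \<le> 1" by (simp add: hh_formula)
lemma hh_one: "d \<ge> 0 \<Longrightarrow> c \<le> x \<Longrightarrow> hh c d x = 1"
  by (auto simp: hh_formula field_simps min_def)
lemma hh_zero: "d \<ge> 0 \<Longrightarrow> x < c \<Longrightarrow> x \<le> c - d \<Longrightarrow> hh c d x = 0"
  by (auto simp: hh_formula field_simps max_def min_def divide_le_0_iff)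
lemma hh_mid: "d > 0 \<Longrightarrow> c - d \<le> x \<Longrightarrow> x \<le> c \<Longrightarrow> hh c d x = (x - c + d) / d"
  by (auto simp: hh_formula field_simps max_def min_def)

context real_distribution
begin

lemma measure_lessThan: "measure M {..<t} = cdf M t - measure M {t}"
proof -
  have "measure M ({..<t} \<union> {t}) = measure M {..<t} + measure M {t}"
    by (rule finite_measure_Union) auto
  moreover have "{..<t} \<union> {t} = {..t}" by auto
  ultimately show ?thesis by (simp add: cdf_def)
qed

lemma cdf_mono': "mono (cdf M)" by (auto simp: mono_def cdf_nondecreasing)

lemma cdf_meas[measurable]: "cdf M \<in> borel_measurable borel"
  by (rule borel_measurable_mono[OF cdf_mono'])

lemma atom_meas[measurable]: "(\<lambda>t. measure M {t}) \<in> borel_measurable borel"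
proof -
  have "mono (\<lambda>t. measure M {..<t})" by (auto simp: mono_def intro!: finite_measure_mono)
  then have "(\<lambda>t. measure M {..<t}) \<in> borel_measurable borel" by (rule borel_measurable_mono)
  then have "(\<lambda>t. cdf M t - measure M {..<t}) \<in> borel_measurable borel" by measurable
  then show ?thesis by (simp add: measure_lessThan)
qed

lemma lt_le_cdf: "s < t \<Longrightarrow> cdf M s \<le> cdf M t - measure M {t}"
proof -
  assume "s < t"
  then have "measure M {..s} \<le> measure M {..<t}" by (intro finite_measure_mono) auto
  then show ?thesis using measure_lessThan[of t] by (simp add: cdf_def)
qed

lemma cdf_atom_le: "measure M {t} \<le> cdf M t"
  unfolding cdf_def by (auto intro!: finite_measure_mono)

lemma L1:
  assumes c: "c \<ge> 0"
  shows "measure M {t. cdf M t \<le> c} \<le> c"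
proof -
  define S where "S = {t. cdf M t \<le> c}"
  have down: "s \<in> S" if "t \<in> S" "s \<le> t" for s t
    using that cdf_nondecreasing[of s t] by (auto simp: S_def)
  show ?thesis
  proof (cases "S = UNIV")
    case True
    have "\<forall>t. cdf M t \<le> c" using True by (auto simp: S_def set_eq_iff)
    then have "1 \<le> c"
      by (intro tendsto_upperbound[OF cdf_lim_at_top_prob] always_eventually) auto
    then show ?thesis using prob_le_1[of "{t. cdf M t \<le> c}"] by linarith
  next
    case nU: False
    then obtain t0 where t0: "t0 \<notin> S" by auto
    have ub: "s < t0" if "s \<in> S" for s using down[OF that] t0 by (meson not_le)
    show ?thesis
    proof (cases "S = {}")
      case True then show ?thesis using c by (simp add: S_def)
    next
      case ne: False
      have bdd: "bdd_above S" using ub by (auto simp: bdd_above_def intro: less_imp_le)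
      define b where "b = Sup S"
      show ?thesis
      proof (cases "b \<in> S")
        case True
        have "S = {..b}" using down[OF True] cSup_upper[OF _ bdd] by (auto simp: b_def)
        moreover have "cdf M b \<le> c" using True by (simp add: S_def)
        ultimately show ?thesis unfolding S_def cdf_def by simp
      next
        case False
        have SS: "S = {..<b}"
        proof
          show "S \<subseteq> {..<b}"
          proof
            fix s assume s: "s \<in> S"
            then have "s \<le> b" using cSup_upper[OF s bdd] by (simp add: b_def)
            moreover have "s \<noteq> b" using s False by auto
            ultimately show "s \<in> {..<b}" by simp
          qed
          show "{..<b} \<subseteq> S"
          proof
            fix t assume "t \<in> {..<b}"
            then have "t < Sup S" by (simp add: b_def)
            then obtain s where "s \<in> S" "t < s" using less_cSup_iff[OF ne bdd] by auto
            then show "t \<in> S" using down by auto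
          qed
        qed
        have "measure M {..<b} \<le> c"
        proof (rule tendsto_upperbound[OF cdf_at_left])
          show "\<forall>\<^sub>F x in at_left b. cdf M x \<le> c"
            unfolding eventually_at_left_field
          proof (intro exI[of _ "b - 1"] conjI allI impI)
            fix y assume "y < b" then have "y \<in> S" using SS by auto
            then show "cdf M y \<le> c" by (simp add: S_def)
          qed simp
        qed simp
        then show ?thesis using SS by (simp add: S_def)
      qed
    qed
  qed
qed

end


context real_distribution
begin

lemma H_meas[measurable]: "(\<lambda>t. hh (cdf M t) (measure M {t}) x) \<in> borel_measurable borel"
proof -
  have "(\<lambda>t. hh (cdf M t) (measure M {t}) x) = (\<lambda>t. if measure M {t} = 0 then (if cdf M t \<le> x then 1 else 0)
      else max 0 (min 1 ((x - cdf M t + measure M {t}) / measure M {t})))"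
    by (simp add: hh_formula fun_eq_iff)
  also have "\<dots> \<in> borel_measurable borel" by measurable
  finally show ?thesis .
qed

lemma H_int: "integrable N (\<lambda>t. hh (cdf M t) (measure M {t}) x)"
  if "finite_measure N" "sets N = sets borel"
proof -
  interpret N: finite_measure N by fact
  show ?thesis
  proof (rule N.integrable_const_bound[where B=1])
    show "AE t in N. norm (hh (cdf M t) (measure M {t}) x) \<le> 1"
      by (simp add: hh_nonneg hh_le1)
    show "(\<lambda>t. hh (cdf M t) (measure M {t}) x) \<in> borel_measurable N"
      using H_meas measurable_cong_sets[OF that(2) refl] by blast
  qed
qed

lemma PIT:
  assumes x0: "0 \<le> x" and x1: "x \<le> 1"
  shows "(\<integral>t. hh (cdf M t) (measure M {t}) x \<partial>M) = x"
proof -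
  define H where "H t = hh (cdf M t) (measure M {t}) x" for t
  have Hm[measurable]: "H \<in> borel_measurable M" unfolding H_def by measurable
  have Hi: "integrable M H" unfolding H_def by (rule H_int) (auto intro: finite_measure_axioms)
  have CD: "0 \<le> cdf M t - measure M {t}" for t using cdf_atom_le[of t] by simp
  consider "x = 1" | "x = 0" | "0 < x" "x < 1" using x0 x1 by linarith
  then show ?thesis
  proof cases
    case 1
    have h1: "H t = 1" for t unfolding H_def using 1 cdf_bounded_prob[of t] by (intro hh_one) auto
    have "(\<integral>t. H t \<partial>M) = 1" using prob_space by (simp add: h1)
    then show ?thesis using 1 by (simp add: H_def)
  next
    case 2
    have le: "H t \<le> indicator {t. cdf M t \<le> 0} t" for t
    proof (cases "cdf M t \<le> 0")
      case True then show ?thesis by (simp add: H_def hh_le1)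
    next
      case False then show ?thesis using 2 CD[of t] by (simp add: H_def hh_zero)
    qed
    have "integral\<^sup>L M H \<le> integral\<^sup>L M (indicator {t. cdf M t \<le> 0})"
      by (rule integral_mono[OF Hi _ le]) (auto intro!: integrable_real_indicator simp: less_top[symmetric])
    also have "\<dots> = measure M {t. cdf M t \<le> 0}" by simp
    also have "\<dots> \<le> 0" by (rule L1) simp
    finally have "integral\<^sup>L M H \<le> 0" .
    moreover have "0 \<le> integral\<^sup>L M H" by (rule integral_nonneg_AE) (simp add: H_def hh_nonneg)
    ultimately have "integral\<^sup>L M H = x" using 2 by simp
    then show ?thesis unfolding H_def .
  next
    case 3
    define T where "T = {t. x \<le> cdf M t}"
    have "\<forall>\<^sub>F t in at_top. x < cdf M t"
      using cdf_lim_at_top_prob 3 by (simp add: order_tendsto_iff)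
    then obtain t1 where "x < cdf M t1" by (auto simp: eventually_at_top_linorder)
    then have Tne: "T \<noteq> {}" by (auto simp: T_def intro: less_imp_le)
    have "\<forall>\<^sub>F t in at_bot. cdf M t < x"
      using cdf_lim_at_bot 3 by (simp add: order_tendsto_iff)
    then obtain t0 where t0: "\<And>t. t \<le> t0 \<Longrightarrow> cdf M t < x" by (auto simp: eventually_at_bot_linorder)
    have Tbdd: "bdd_below T"
      unfolding bdd_below_def T_def using t0 by (metis linorder_not_less mem_Collect_eq not_le_imp_less order_less_imp_le)
    define a where "a = Inf T"
    have below: "cdf M t < x" if "t < a" for t
    proof (rule ccontr)
      assume "\<not> cdf M t < x"
      then have "t \<in> T" by (simp add: T_def)
      then have "a \<le> t" unfolding a_def by (rule cInf_lower[OF _ Tbdd])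
      then show False using that by simp
    qed
    have Ca: "x \<le> cdf M a"
    proof (rule tendsto_lowerbound)
      show "(cdf M \<longlongrightarrow> cdf M a) (at_right a)"
        using cdf_is_right_cont[of a] by (simp add: continuous_within)
      show "\<forall>\<^sub>F t in at_right a. x \<le> cdf M t"
        unfolding eventually_at_right_field
      proof (intro exI[of _ "a + 1"] conjI allI impI)
        fix t assume "a < t"
        then obtain s where "s \<in> T" "s < t" using cInf_less_iff[OF Tne Tbdd] by (auto simp: a_def)
        then show "x \<le> cdf M t" using cdf_nondecreasing[of s t] by (simp add: T_def)
      qed simp
    qed simp
    define L where "L = cdf M a - measure M {a}"
    have L: "L = measure M {..<a}" by (simp add: L_def measure_lessThan)
    have Lx: "L \<le> x"
    proof -
      have "L \<le> measure M {t. cdf M t \<le> x}"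
        unfolding L by (rule finite_measure_mono) (auto dest: below intro: less_imp_le)
      also have "\<dots> \<le> x" by (rule L1) (use 3 in simp)
      finally show ?thesis .
    qed
    define N where "N = {t. a < t \<and> cdf M t \<le> x}"
    have Nnull: "N \<in> null_sets M"
    proof -
      have Ns: "N \<in> sets M" unfolding N_def by measurable
      have "measure M N \<le> 0"
      proof (cases "cdf M a \<le> x")
        case True
        have "N = {t. cdf M t \<le> x} - {..a}"
          using True cdf_nondecreasing by (auto simp: N_def)
        then have "measure M N = measure M {t. cdf M t \<le> x} - measure M {..a}"
          using True cdf_nondecreasing
          by (simp add: finite_measure_Diff) (subst finite_measure_Diff, auto intro: order_trans)
        also have "\<dots> \<le> x - cdf M a" using L1[of x] 3 by (simp add: cdf_def)
        finally show ?thesis using Ca by simp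
      next
        case False
        have "N = {}"
        proof (rule ccontr)
          assume "N \<noteq> {}"
          then obtain t where "a < t" "cdf M t \<le> x" by (auto simp: N_def)
          then show False using False cdf_nondecreasing[of a t] by linarith
        qed
        then show ?thesis by simp
      qed
      then have "measure M N = 0" by (simp add: measure_le_0_iff)
      then show ?thesis using Ns by (simp add: emeasure_eq_measure null_sets_def)
    qed
    have ae: "AE t in M. H t = indicator {..<a} t + indicator {a} t * H a"
    proof (rule AE_I'[OF Nnull], safe)
      fix t assume ne: "H t \<noteq> indicator {..<a} t + indicator {a} t * H a"
      consider "t < a" | "t = a" | "a < t" by linarith
      then show "t \<in> N"
      proof cases
        case 1
        then have "H t = 1" unfolding H_def using below[OF 1] by (intro hh_one) auto
        then show ?thesis using ne 1 by simp
      next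
        case 2 then show ?thesis using ne by simp
      next
        case 4: 3
        show ?thesis
        proof (rule ccontr)
          assume "t \<notin> N"
          then have "x < cdf M t" using 4 by (auto simp: N_def)
          moreover have "x \<le> cdf M t - measure M {t}" using lt_le_cdf[OF 4] Ca by simp
          ultimately have "H t = 0" unfolding H_def by (intro hh_zero) auto
          then show False using ne 4 by simp
        qed
      qed
    qed
    have "integral\<^sup>L M H = (\<integral>t. indicator {..<a} t + indicator {a} t * H a \<partial>M)"
      by (rule integral_cong_AE[OF Hm _ ae]) simp
    also have "\<dots> = L + measure M {a} * H a"
    proof -
      have i1: "integrable M (indicator {..<a} :: real \<Rightarrow> real)"
        by (auto simp: less_top[symmetric])
      have i2: "integrable M (\<lambda>t. indicator {a} t * H a :: real)"
        by (intro integrable_mult_left) (auto simp: less_top[symmetric])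
      show ?thesis by (simp add: Bochner_Integration.integral_add[OF i1 i2] L)
    qed
    also have "\<dots> = x"
    proof (cases "measure M {a} = 0")
      case True
      then have "cdf M a = x" using Ca Lx by (simp add: L_def)
      then have "H a = 1" unfolding H_def by (intro hh_one) auto
      then show ?thesis using True \<open>cdf M a = x\<close> by (simp add: L_def)
    next
      case False
      then have dp: "measure M {a} > 0" using measure_nonneg[of M "{a}"] by linarith
      have "H a = (x - cdf M a + measure M {a}) / measure M {a}"
        unfolding H_def by (rule hh_mid[OF dp]) (use Lx Ca in \<open>auto simp: L_def\<close>)
      then show ?thesis using dp by (simp add: L_def field_simps)
    qed
    finally have "integral\<^sup>L M H = x" .
    then show ?thesis unfolding H_def .
  qed
qed

end


lemma core:
  assumes nu: "real_distribution nu" and mu: "real_distribution mu"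
  shows "(\<forall>s. cdf nu s = cdf mu s) \<longleftrightarrow>
    (\<forall>x\<in>{0..1}. (\<integral>t. hh (cdf nu t) (measure nu {t}) x \<partial>mu) = x)"
proof
  interpret nu: real_distribution nu by fact
  interpret mu: real_distribution mu by fact
  have Hi: "integrable mu (\<lambda>t. hh (cdf nu t) (measure nu {t}) x)" for x
    by (rule nu.H_int) (auto intro: mu.finite_measure_axioms)
  have Ii: "integrable mu (indicator {..s} :: real \<Rightarrow> real)" for s
    by (auto simp: less_top[symmetric])
  {
    assume "\<forall>s. cdf nu s = cdf mu s"
    then have "cdf nu = cdf mu" by auto
    then have "nu = mu" using cdf_unique nu mu by blast
    then show "\<forall>x\<in>{0..1}. (\<integral>t. hh (cdf nu t) (measure nu {t}) x \<partial>mu) = x"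
      using nu.PIT by auto
  }
  assume Q: "\<forall>x\<in>{0..1}. (\<integral>t. hh (cdf nu t) (measure nu {t}) x \<partial>mu) = x"
  show "\<forall>s. cdf nu s = cdf mu s"
  proof
    fix s
    define c where "c = cdf nu s"
    have c01: "0 \<le> c" "c \<le> 1" using nu.cdf_nonneg nu.cdf_bounded_prob by (auto simp: c_def)
    have "cdf mu s = (\<integral>t. indicator {..s} t \<partial>mu)" by (simp add: cdf_def)
    also have "\<dots> \<le> (\<integral>t. hh (cdf nu t) (measure nu {t}) c \<partial>mu)"
    proof (rule integral_mono[OF Ii Hi])
      fix t
      show "indicator {..s} t \<le> hh (cdf nu t) (measure nu {t}) c"
      proof (cases "t \<le> s")
        case True
        then have "hh (cdf nu t) (measure nu {t}) c = 1"
          by (intro hh_one) (auto simp: c_def nu.cdf_nondecreasing)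
        then show ?thesis using True by simp
      qed (simp add: hh_nonneg)
    qed
    also have "\<dots> = c" using Q c01 by auto
    finally have le1: "cdf mu s \<le> c" .
    have le2: "c \<le> cdf mu s"
    proof (cases "c = 0")
      case True then show ?thesis using mu.cdf_nonneg by simp
    next
      case False
      then have "0 < c" using c01 by simp
      then show ?thesis
      proof (rule dense_le_bounded)
        fix w assume w: "0 < w" "w < c"
        have "w = (\<integral>t. hh (cdf nu t) (measure nu {t}) w \<partial>mu)" using Q w c01 by auto
        also have "\<dots> \<le> (\<integral>t. indicator {..s} t \<partial>mu)"
        proof (rule integral_mono[OF Hi Ii])
          fix t
          show "hh (cdf nu t) (measure nu {t}) w \<le> indicator {..s} t"
          proof (cases "t \<le> s")
            case False
            then have "s < t" by simp
            have "hh (cdf nu t) (measure nu {t}) w = 0"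
              using nu.lt_le_cdf[OF \<open>s < t\<close>] nu.cdf_nondecreasing[of s t] w \<open>s < t\<close>
              by (intro hh_zero) (auto simp: c_def)
            then show ?thesis using False by simp
          qed (simp add: hh_le1)
        qed
        also have "\<dots> = cdf mu s" by (simp add: cdf_def)
        finally show "w \<le> cdf mu s" .
      qed
    qed
    show "cdf nu s = cdf mu s" using le1 le2 by (simp add: c_def)
  qed
qed



lemma dens_prob:
  fixes w :: "'a \<Rightarrow> real"
  assumes wm[measurable]: "w \<in> borel_measurable M" and wn: "\<And>x. x \<in> space M \<Longrightarrow> 0 \<le> w x"
    and wi: "integrable M w" and w1: "(\<integral>x. w x \<partial>M) = 1"
  shows "prob_space (density M w)"
proof (rule prob_spaceI)
  have "emeasure (density M w) (space M) = (\<integral>\<^sup>+ x. ennreal (w x) * indicator (space M) x \<partial>M)"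
    by (rule emeasure_density) auto
  also have "\<dots> = (\<integral>\<^sup>+ x. ennreal (w x) \<partial>M)"
    by (rule nn_integral_cong) simp
  also have "\<dots> = ennreal (\<integral>x. w x \<partial>M)"
    by (rule nn_integral_eq_integral[OF wi]) (simp add: wn)
  finally show "emeasure (density M w) (space (density M w)) = 1" using w1 by simp
qed

lemma transfer:
  fixes w :: "'a \<Rightarrow> real" and H :: "real \<Rightarrow> real"
  assumes wm[measurable]: "w \<in> borel_measurable M" and wn: "\<And>x. x \<in> space M \<Longrightarrow> 0 \<le> w x"
    and gm[measurable]: "g \<in> borel_measurable M" and Hm[measurable]: "H \<in> borel_measurable borel"
  shows "(\<integral>x. w x * H (g x) \<partial>M) = (\<integral>t. H t \<partial>distr (density M w) borel g)"
proof -
  have "(\<integral>t. H t \<partial>distr (density M w) borel g) = (\<integral>x. H (g x) \<partial>density M w)"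
    by (rule integral_distr) auto
  also have "\<dots> = (\<integral>x. w x *\<^sub>R H (g x) \<partial>M)"
    by (rule integral_density) (auto simp: wn)
  finally show ?thesis by simp
qed

theorem theorem5:
  fixes M :: "'a measure" and N :: "'b measure"
    and prior :: "'a \<Rightarrow> real" and obs :: "'a \<Rightarrow> 'b \<Rightarrow> real"
    and phi :: "'a \<Rightarrow> 'b \<Rightarrow> real" and f :: "'a \<Rightarrow> 'b \<Rightarrow> real"
  assumes sfM: "sigma_finite_measure M" and sfN: "sigma_finite_measure N"
    and prior_meas: "prior \<in> borel_measurable M"
    and prior_nonneg: "\<And>\<theta>. \<theta> \<in> space M \<Longrightarrow> prior \<theta> \<ge> 0"
    and prior_int: "integrable M prior" and prior_one: "(\<integral>\<theta>. prior \<theta> \<partial>M) = 1"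
    and obs_meas: "(\<lambda>(\<theta>, y). obs \<theta> y) \<in> borel_measurable (M \<Otimes>\<^sub>M N)"
    and obs_nonneg: "\<And>\<theta> y. \<theta> \<in> space M \<Longrightarrow> y \<in> space N \<Longrightarrow> obs \<theta> y \<ge> 0"
    and obs_int: "\<And>\<theta>. \<theta> \<in> space M \<Longrightarrow> integrable N (\<lambda>y. obs \<theta> y)"
    and obs_one: "\<And>\<theta>. \<theta> \<in> space M \<Longrightarrow> (\<integral>y. obs \<theta> y \<partial>N) = 1"
    and marg_int: "\<And>y. y \<in> space N \<Longrightarrow> integrable M (\<lambda>\<theta>. obs \<theta> y * prior \<theta>)"
    and marg_pos: "\<And>y. y \<in> space N \<Longrightarrow> marg M prior obs y > 0"
    and phi_meas: "(\<lambda>(\<theta>, y). phi \<theta> y) \<in> borel_measurable (M \<Otimes>\<^sub>M N)"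
    and phi_nonneg: "\<And>\<theta> y. \<theta> \<in> space M \<Longrightarrow> y \<in> space N \<Longrightarrow> phi \<theta> y \<ge> 0"
    and phi_int: "\<And>y. y \<in> space N \<Longrightarrow> integrable M (\<lambda>\<theta>. phi \<theta> y)"
    and phi_one: "\<And>y. y \<in> space N \<Longrightarrow> (\<integral>\<theta>. phi \<theta> y \<partial>M) = 1"
    and f_meas: "(\<lambda>(\<theta>, y). f \<theta> y) \<in> borel_measurable (M \<Otimes>\<^sub>M N)"
    and y: "y \<in> space N"
  shows "(\<forall>s. fitted_cdf M phi f s y = true_cdf M prior obs f s y) \<longleftrightarrow>
         (\<forall>x\<in>{0..1}. q_fun M prior obs phi f x y = x)"
proof -
  define g where "g \<theta> = f \<theta> y" for \<theta>
  define w where "w \<theta> = phi \<theta> y" for \<theta>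
  define p where "p \<theta> = post M prior obs \<theta> y" for \<theta>
  have sec: "(\<lambda>\<theta>. F \<theta> y) \<in> borel_measurable M"
    if "(\<lambda>(\<theta>, y). F \<theta> y) \<in> borel_measurable (M \<Otimes>\<^sub>M N)" for F :: "'a \<Rightarrow> 'b \<Rightarrow> real"
    using measurable_compose[OF measurable_Pair2'[OF y] that] by simp
  have gm[measurable]: "g \<in> borel_measurable M" unfolding g_def[abs_def] by (rule sec[OF f_meas])
  have wm[measurable]: "w \<in> borel_measurable M" unfolding w_def[abs_def] by (rule sec[OF phi_meas])
  have om[measurable]: "(\<lambda>\<theta>. obs \<theta> y) \<in> borel_measurable M" by (rule sec[OF obs_meas])
  note prior_meas[measurable]
  have pm[measurable]: "p \<in> borel_measurable M"
    unfolding p_def[abs_def] post_def by measurable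
  have wn: "\<And>x. x \<in> space M \<Longrightarrow> 0 \<le> w x" using phi_nonneg y by (simp add: w_def)
  have pn: "\<And>x. x \<in> space M \<Longrightarrow> 0 \<le> p x"
    using obs_nonneg[OF _ y] prior_nonneg marg_pos[OF y] by (simp add: p_def post_def)
  have wi: "integrable M w" using phi_int[OF y] by (simp add: w_def[abs_def])
  have w1: "(\<integral>x. w x \<partial>M) = 1" using phi_one[OF y] by (simp add: w_def)
  have pi: "integrable M p" using marg_int[OF y] by (simp add: p_def[abs_def] post_def)
  have p1: "(\<integral>x. p x \<partial>M) = 1"
    using marg_pos[OF y] by (simp add: p_def post_def marg_def)
  define nu where "nu = distr (density M w) borel g"
  define mu where "mu = distr (density M p) borel g"
  have nu: "real_distribution nu"
  proof -
    interpret prob_space "density M w" by (rule dens_prob[OF wm wn wi w1])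
    show ?thesis unfolding nu_def by (intro real_distribution_distr) simp
  qed
  have mu: "real_distribution mu"
  proof -
    interpret prob_space "density M p" by (rule dens_prob[OF pm pn pi p1])
    show ?thesis unfolding mu_def by (intro real_distribution_distr) simp
  qed
  interpret nu: real_distribution nu by (rule nu)
  interpret mu: real_distribution mu by (rule mu)
  have ind: "indicator {\<theta>. f \<theta> y \<le> s} \<theta> = (indicator {..s} (g \<theta>) :: real)" for s \<theta>
    by (simp add: indicator_def g_def)
  have FC: "fitted_cdf M phi f s y = cdf nu s" for s
  proof -
    have "fitted_cdf M phi f s y = (\<integral>\<theta>. w \<theta> * indicator {..s} (g \<theta>) \<partial>M)"
      unfolding fitted_cdf_def ind by (simp add: w_def mult.commute)
    also have "\<dots> = (\<integral>t. indicator {..s} t \<partial>nu)"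
      unfolding nu_def by (rule transfer[OF wm wn gm]) measurable
    finally show ?thesis by (simp add: cdf_def)
  qed
  have TC: "true_cdf M prior obs f s y = cdf mu s" for s
  proof -
    have "true_cdf M prior obs f s y = (\<integral>\<theta>. p \<theta> * indicator {..s} (g \<theta>) \<partial>M)"
      unfolding true_cdf_def ind by (simp add: p_def mult.commute)
    also have "\<dots> = (\<integral>t. indicator {..s} t \<partial>mu)"
      unfolding mu_def by (rule transfer[OF pm pn gm]) measurable
    finally show ?thesis by (simp add: cdf_def)
  qed
  have TIE: "fitted_tie M phi f s y = measure nu {s}" for s
  proof -
    have ind2: "indicator {\<theta>. f \<theta> y = s} \<theta> = (indicator {s} (g \<theta>) :: real)" for \<theta>
      by (simp add: indicator_def g_def)
    have "fitted_tie M phi f s y = (\<integral>\<theta>. w \<theta> * indicator {s} (g \<theta>) \<partial>M)"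
      unfolding fitted_tie_def ind2 by (simp add: w_def mult.commute)
    also have "\<dots> = (\<integral>t. indicator {s} t \<partial>nu)"
      unfolding nu_def by (rule transfer[OF wm wn gm]) measurable
    finally show ?thesis by simp
  qed
  have QF: "q_fun M prior obs phi f x y = (\<integral>t. hh (cdf nu t) (measure nu {t}) x \<partial>mu)" for x
  proof -
    have "q_fun M prior obs phi f x y = (\<integral>\<theta>. p \<theta> * hh (cdf nu (g \<theta>)) (measure nu {g \<theta>}) x \<partial>M)"
      unfolding q_fun_def rand_pit_cdf_def FC TIE hh_def by (simp add: p_def g_def)
    also have "\<dots> = (\<integral>t. hh (cdf nu t) (measure nu {t}) x \<partial>mu)"
      unfolding mu_def by (rule transfer[OF pm pn gm nu.H_meas])
    finally show ?thesis .
  qed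
  show ?thesis unfolding FC TC QF by (rule core[OF nu mu])
qed

end
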